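(* Let $\Gamma,\Delta$ be finitely generated groups with free continuous actions on compact metric spaces $Y$ and $X$ respectively, and let $f:Y\to X$ be a homeomorphism inducing a quasi-isometry of warped cones, i.e. there are an index set $I$, maps $i\mapsto t_i$ and $i\mapsto\tau_i$ from $I$ onto $(0,\infty)$, and $C\ge1,A\ge0$ such that each $f:(t_iY,d_\Gamma)\to(\tau_iX,d_\Delta)$ is a $(C,A)$-quasi-isometry. Then there is a continuous cocycle $\delta:\Gamma\times Y\to\Delta$ (i.e. $\delta(\gamma_2,\gamma_1y)\delta(\gamma_1,y)=\delta(\gamma_2\gamma_1,y)$), such that for each fixed $y\in Y$ the map $\gamma\mapsto\delta(\gamma,y)$ is a bijection $\Gamma\to\Delta$, and there are constants $C'\ge1$, $A'\ge0$ with $C'^{-1}|\gamma|-A'\le|\delta(\gamma,y)|\le C'|\gamma|+A'$ for all $\gamma\in\Gamma,y\in Y$. In particular, $\Gamma$ and $\Delta$ are bijectively quasi-isometric.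
   Context: $|\cdot|$ is word length with respect to fixed finite symmetric generating sets. For a compact metric space $(Y,d)$ with a $\Gamma$-action and $t>0$, $tY$ is $Y$ with metric $td$ and $d_\Gamma$ is the largest metric on $tY$ with $d_\Gamma\le td$ and $d_\Gamma(y,sy)\le1$ for generators $s$. A $(C,A)$-quasi-isometry $g:Z\to W$ satisfies $C^{-1}d(z,z')-A\le d(g(z),g(z'))\le Cd(z,z')+A$ and the $A$-neighbourhood of $g(Z)$ equals $W$. $\Gamma\times Y$ is given the product topology with $\Gamma$, $\Delta$ discrete. *)

theory Defs
  imports "HOL-Analysis.Analysis" "HOL-Algebra.Generated_Groups"
begin

definition fg_group :: "('g, 'b) monoid_scheme \<Rightarrow> 'g set \<Rightarrow> bool" where
  "fg_group G S \<longleftrightarrow> group G \<and> finite S \<and> S \<subseteq> carrier G \<and>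
     (\<forall>s\<in>S. inv\<^bsub>G\<^esub> s \<in> S) \<and> generate G S = carrier G"

definition word_length :: "('g, 'b) monoid_scheme \<Rightarrow> 'g set \<Rightarrow> 'g \<Rightarrow> nat" where
  "word_length G S g = (LEAST n. \<exists>ws. length ws = n \<and> set ws \<subseteq> S \<and>
       foldr (\<lambda>a b. a \<otimes>\<^bsub>G\<^esub> b) ws \<one>\<^bsub>G\<^esub> = g)"

definition free_cont_action ::
  "('g, 'b) monoid_scheme \<Rightarrow> 'y::topological_space set \<Rightarrow> ('g \<Rightarrow> 'y \<Rightarrow> 'y) \<Rightarrow> bool" where
  "free_cont_action G Y phi \<longleftrightarrow>
     (\<forall>g\<in>carrier G. \<forall>y\<in>Y. phi g y \<in> Y) \<and>
     (\<forall>y\<in>Y. phi \<one>\<^bsub>G\<^esub> y = y) \<and>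
     (\<forall>g\<in>carrier G. \<forall>h\<in>carrier G. \<forall>y\<in>Y. phi (g \<otimes>\<^bsub>G\<^esub> h) y = phi g (phi h y)) \<and>
     (\<forall>g\<in>carrier G. continuous_on Y (phi g)) \<and>
     (\<forall>g\<in>carrier G. \<forall>y\<in>Y. phi g y = y \<longrightarrow> g = \<one>\<^bsub>G\<^esub>)"

definition is_metric_on :: "'a set \<Rightarrow> ('a \<Rightarrow> 'a \<Rightarrow> real) \<Rightarrow> bool" where
  "is_metric_on Y d \<longleftrightarrow>
     (\<forall>x\<in>Y. \<forall>y\<in>Y. 0 \<le> d x y \<and> (d x y = 0 \<longleftrightarrow> x = y) \<and> d x y = d y x) \<and>
     (\<forall>x\<in>Y. \<forall>y\<in>Y. \<forall>z\<in>Y. d x z \<le> d x y + d y z)"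

text \<open>The warped metric d_Gamma on tY: the largest metric d on Y with d \<le> t * dist
  and d(y, s y) \<le> 1 for all generators s.\<close>
definition warped_dist ::
  "'g set \<Rightarrow> ('g \<Rightarrow> 'y \<Rightarrow> 'y) \<Rightarrow> 'y::metric_space set \<Rightarrow> real \<Rightarrow> 'y \<Rightarrow> 'y \<Rightarrow> real" where
  "warped_dist S phi Y t x y = Sup {d x y | d. is_metric_on Y d \<and>
       (\<forall>a\<in>Y. \<forall>b\<in>Y. d a b \<le> t * dist a b) \<and> (\<forall>a\<in>Y. \<forall>s\<in>S. d a (phi s a) \<le> 1)}"

definition is_qi :: "real \<Rightarrow> real \<Rightarrow> 'a set \<Rightarrow> ('a \<Rightarrow> 'a \<Rightarrow> real) \<Rightarrow>
    'b set \<Rightarrow> ('b \<Rightarrow> 'b \<Rightarrow> real) \<Rightarrow> ('a \<Rightarrow> 'b) \<Rightarrow> bool" where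
  "is_qi C A Z dZ W dW g \<longleftrightarrow> g ` Z \<subseteq> W \<and>
     (\<forall>z\<in>Z. \<forall>z'\<in>Z. dZ z z' / C - A \<le> dW (g z) (g z') \<and> dW (g z) (g z') \<le> C * dZ z z' + A) \<and>
     {w\<in>W. \<exists>z\<in>Z. dW w (g z) \<le> A} = W"

end

theory Submission
  imports Defs
begin

lemma foldr_prod_closed:
  assumes "monoid G" "set ws \<subseteq> carrier G"
  shows "foldr (\<lambda>a b. a \<otimes>\<^bsub>G\<^esub> b) ws \<one>\<^bsub>G\<^esub> \<in> carrier G"
  using assms(2) by (induction ws) (auto intro: monoid.m_closed[OF assms(1)] monoid.one_closed[OF assms(1)])

lemma foldr_prod_append:
  assumes "monoid G" "set ws \<subseteq> carrier G" "set vs \<subseteq> carrier G"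
  shows "foldr (\<lambda>a b. a \<otimes>\<^bsub>G\<^esub> b) (ws @ vs) \<one>\<^bsub>G\<^esub> =
    foldr (\<lambda>a b. a \<otimes>\<^bsub>G\<^esub> b) ws \<one>\<^bsub>G\<^esub> \<otimes>\<^bsub>G\<^esub> foldr (\<lambda>a b. a \<otimes>\<^bsub>G\<^esub> b) vs \<one>\<^bsub>G\<^esub>"
  using assms(2)
proof (induction ws)
  case Nil then show ?case using foldr_prod_closed[OF assms(1,3)] monoid.l_one[OF assms(1)] by simp
next
  case (Cons a ws)
  then show ?case using foldr_prod_closed[OF assms(1,3)] foldr_prod_closed[OF assms(1), of ws]
    by (simp add: monoid.m_assoc[OF assms(1)])
qed

lemma fg_word_exists:
  assumes "fg_group G S" "g \<in> carrier G"
  shows "\<exists>ws. set ws \<subseteq> S \<and> foldr (\<lambda>a b. a \<otimes>\<^bsub>G\<^esub> b) ws \<one>\<^bsub>G\<^esub> = g"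
proof -
  have gr: "group G" and SC: "S \<subseteq> carrier G" and sym: "\<forall>s\<in>S. inv\<^bsub>G\<^esub> s \<in> S"
    and gen: "generate G S = carrier G" using assms(1) unfolding fg_group_def by auto
  have mo: "monoid G" using gr by (simp add: group.is_monoid)
  have "g \<in> generate G S" using assms(2) gen by simp
  then show ?thesis
  proof (induction rule: generate.induct)
    case one then show ?case by (intro exI[of _ "[]"]) simp
  next
    case (incl h) then show ?case using SC by (intro exI[of _ "[h]"]) (auto simp: monoid.r_one[OF mo])
  next
    case (inv h) then show ?case using SC sym
      by (intro exI[of _ "[inv\<^bsub>G\<^esub> h]"]) (auto simp: monoid.r_one[OF mo] group.inv_closed[OF gr])
  next
    case (eng h1 h2)
    then obtain w1 w2 where "set w1 \<subseteq> S" "foldr (\<lambda>a b. a \<otimes>\<^bsub>G\<^esub> b) w1 \<one>\<^bsub>G\<^esub> = h1"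
       "set w2 \<subseteq> S" "foldr (\<lambda>a b. a \<otimes>\<^bsub>G\<^esub> b) w2 \<one>\<^bsub>G\<^esub> = h2" by blast
    then show ?case using SC foldr_prod_append[OF mo, of w1 w2]
      by (intro exI[of _ "w1 @ w2"]) auto
  qed
qed

lemma fg_wl_attained:
  assumes "fg_group G S" "g \<in> carrier G"
  shows "\<exists>ws. length ws = word_length G S g \<and> set ws \<subseteq> S \<and> foldr (\<lambda>a b. a \<otimes>\<^bsub>G\<^esub> b) ws \<one>\<^bsub>G\<^esub> = g"
proof -
  obtain ws where "set ws \<subseteq> S \<and> foldr (\<lambda>a b. a \<otimes>\<^bsub>G\<^esub> b) ws \<one>\<^bsub>G\<^esub> = g"
    using fg_word_exists[OF assms] by blast
  then have "\<exists>n ws. length ws = n \<and> set ws \<subseteq> S \<and> foldr (\<lambda>a b. a \<otimes>\<^bsub>G\<^esub> b) ws \<one>\<^bsub>G\<^esub> = g" by blast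
  then show ?thesis unfolding word_length_def by (rule LeastI_ex)
qed

lemma wl_le:
  assumes "set ws \<subseteq> S"
  shows "word_length G S (foldr (\<lambda>a b. a \<otimes>\<^bsub>G\<^esub> b) ws \<one>\<^bsub>G\<^esub>) \<le> length ws"
  unfolding word_length_def using assms by (intro Least_le) blast

lemma wl_mult:
  assumes "fg_group G S" "a \<in> carrier G" "b \<in> carrier G"
  shows "word_length G S (a \<otimes>\<^bsub>G\<^esub> b) \<le> word_length G S a + word_length G S b"
proof -
  have mo: "monoid G" and SC: "S \<subseteq> carrier G" using assms(1) unfolding fg_group_def by (auto simp: group.is_monoid)
  obtain wa where wa: "length wa = word_length G S a" "set wa \<subseteq> S" "foldr (\<lambda>a b. a \<otimes>\<^bsub>G\<^esub> b) wa \<one>\<^bsub>G\<^esub> = a"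
    using fg_wl_attained[OF assms(1,2)] by blast
  obtain wb where wb: "length wb = word_length G S b" "set wb \<subseteq> S" "foldr (\<lambda>a b. a \<otimes>\<^bsub>G\<^esub> b) wb \<one>\<^bsub>G\<^esub> = b"
    using fg_wl_attained[OF assms(1,3)] by blast
  have "a \<otimes>\<^bsub>G\<^esub> b = foldr (\<lambda>a b. a \<otimes>\<^bsub>G\<^esub> b) (wa @ wb) \<one>\<^bsub>G\<^esub>"
    using foldr_prod_append[OF mo, of wa wb] wa wb SC by auto
  also have "word_length G S \<dots> \<le> length (wa @ wb)" by (rule wl_le) (use wa wb in auto)
  finally show ?thesis using wa wb by simp
qed


lemma min_metric:
  fixes X :: "'a::metric_space set"
  assumes "t > 0"
  shows "is_metric_on X (\<lambda>a b. min (t * dist a b) 1)"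
  unfolding is_metric_on_def
proof (intro conjI ballI)
  fix a b c :: 'a
  show "min (t * dist a c) 1 \<le> min (t * dist a b) 1 + min (t * dist b c) 1"
  proof -
    have "t * dist a c \<le> t * dist a b + t * dist b c"
      using dist_triangle[of a c b] assms by (simp add: distrib_left[symmetric] mult_left_mono)
    moreover have "0 \<le> t * dist a b" "0 \<le> t * dist b c" using assms by auto
    ultimately show ?thesis by (auto simp: min_def)
  qed
qed (use assms in \<open>auto simp: dist_commute min_def\<close>)

lemma warped_nonempty:
  assumes "t > 0"
  shows "{d x y | d. is_metric_on Y d \<and> (\<forall>a\<in>Y. \<forall>b\<in>Y. d a b \<le> t * dist a b) \<and>
     (\<forall>a\<in>Y. \<forall>s\<in>S. d a (phi s a) \<le> 1)} \<noteq> {}"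
proof -
  have "is_metric_on Y (\<lambda>a b. min (t * dist a b) 1) \<and> (\<forall>a\<in>Y. \<forall>b\<in>Y. min (t * dist a b) 1 \<le> t * dist a b) \<and>
     (\<forall>a\<in>Y. \<forall>s\<in>S. min (t * dist a (phi s a)) 1 \<le> 1)"
    using min_metric[OF assms] by auto
  then show ?thesis by blast
qed

lemma warped_le_1:
  assumes "t > 0" "a \<in> Y" "s \<in> S"
  shows "warped_dist S phi Y t a (phi s a) \<le> 1"
  unfolding warped_dist_def
  by (rule cSup_least[OF warped_nonempty[OF assms(1)]]) (use assms in auto)

lemma warped_ge:
  assumes "is_metric_on Y d" "\<forall>a\<in>Y. \<forall>b\<in>Y. d a b \<le> t * dist a b"
    "\<forall>a\<in>Y. \<forall>s\<in>S. d a (phi s a) \<le> 1" "x \<in> Y" "y \<in> Y"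
  shows "d x y \<le> warped_dist S phi Y t x y"
  unfolding warped_dist_def
proof (rule cSup_upper)
  show "d x y \<in> {d x y | d. is_metric_on Y d \<and> (\<forall>a\<in>Y. \<forall>b\<in>Y. d a b \<le> t * dist a b) \<and>
     (\<forall>a\<in>Y. \<forall>s\<in>S. d a (phi s a) \<le> 1)}" using assms by blast
  show "bdd_above {d x y | d. is_metric_on Y d \<and> (\<forall>a\<in>Y. \<forall>b\<in>Y. d a b \<le> t * dist a b) \<and>
     (\<forall>a\<in>Y. \<forall>s\<in>S. d a (phi s a) \<le> 1)}"
    unfolding bdd_above_def using assms(4,5) by auto
qed

inductive chain :: "('h \<Rightarrow> 'x \<Rightarrow> 'x) \<Rightarrow> 'h set \<Rightarrow> 'x::metric_space set \<Rightarrow> 'x \<Rightarrow> 'x \<Rightarrow> 'h list \<Rightarrow> real \<Rightarrow> bool"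
  for psi T X x where
  c0: "x \<in> X \<Longrightarrow> chain psi T X x x [] 0"
| cm: "chain psi T X x z ws e \<Longrightarrow> w \<in> X \<Longrightarrow> chain psi T X x w ws (e + dist z w)"
| cj: "chain psi T X x z ws e \<Longrightarrow> s \<in> T \<Longrightarrow> chain psi T X x (psi s z) (s # ws) e"

lemma chain_props:
  assumes "chain psi T X x z ws e" "\<forall>s\<in>T. \<forall>z\<in>X. psi s z \<in> X"
  shows "z \<in> X \<and> e \<ge> 0 \<and> set ws \<subseteq> T"
  using assms by (induction rule: chain.induct) auto

definition Gf :: "('h \<Rightarrow> 'x \<Rightarrow> 'x) \<Rightarrow> 'h set \<Rightarrow> 'x::metric_space set \<Rightarrow> 'x \<Rightarrow> real \<Rightarrow> real \<Rightarrow> 'x \<Rightarrow> real" where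
  "Gf psi T X x \<tau> M z = Inf (insert M {\<tau> * e + real (length ws) | ws e. chain psi T X x z ws e})"

lemma Gf_bdd:
  assumes "\<forall>s\<in>T. \<forall>z\<in>X. psi s z \<in> X" "\<tau> > 0" "M \<ge> 0"
  shows "bdd_below (insert M {\<tau> * e + real (length ws) | ws e. chain psi T X x z ws e})"
  unfolding bdd_below_def
proof (intro exI[of _ 0] ballI)
  fix c assume "c \<in> insert M {\<tau> * e + real (length ws) | ws e. chain psi T X x z ws e}"
  then show "0 \<le> c" using chain_props[OF _ assms(1)] assms(2,3) by auto
qed

lemma Gf_range:
  assumes "\<forall>s\<in>T. \<forall>z\<in>X. psi s z \<in> X" "\<tau> > 0" "M \<ge> 0"
  shows "0 \<le> Gf psi T X x \<tau> M z" "Gf psi T X x \<tau> M z \<le> M"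
proof -
  show "0 \<le> Gf psi T X x \<tau> M z" unfolding Gf_def
    by (rule cInf_greatest) (use chain_props[OF _ assms(1)] assms(2,3) in auto)
  show "Gf psi T X x \<tau> M z \<le> M" unfolding Gf_def
    by (rule cInf_lower) (use Gf_bdd[OF assms] in auto)
qed

lemma Gf_base:
  assumes "\<forall>s\<in>T. \<forall>z\<in>X. psi s z \<in> X" "\<tau> > 0" "M \<ge> 0" "x \<in> X"
  shows "Gf psi T X x \<tau> M x = 0"
proof -
  have "Gf psi T X x \<tau> M x \<le> 0" unfolding Gf_def
  proof (rule cInf_lower)
    show "0 \<in> insert M {\<tau> * e + real (length ws) | ws e. chain psi T X x x ws e}"
      using chain.c0[OF assms(4), of psi T] by force
  qed (rule Gf_bdd[OF assms(1-3)])
  then show ?thesis using Gf_range[OF assms(1-3)] by (meson order.antisym)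
qed

lemma Gf_move:
  assumes "\<forall>s\<in>T. \<forall>z\<in>X. psi s z \<in> X" "\<tau> > 0" "M \<ge> 0" "w \<in> X"
  shows "Gf psi T X x \<tau> M w \<le> Gf psi T X x \<tau> M z + \<tau> * dist z w"
proof -
  have "Gf psi T X x \<tau> M w - \<tau> * dist z w \<le> Gf psi T X x \<tau> M z"
    unfolding Gf_def[of psi T X x \<tau> M z]
  proof (rule cInf_greatest)
    fix c assume "c \<in> insert M {\<tau> * e + real (length ws) | ws e. chain psi T X x z ws e}"
    then consider "c = M" | ws e where "chain psi T X x z ws e" "c = \<tau> * e + real (length ws)" by blast
    then show "Gf psi T X x \<tau> M w - \<tau> * dist z w \<le> c"
    proof cases
      case 1 then show ?thesis using Gf_range(2)[OF assms(1-3), of x w] assms(2) zero_le_dist[of z w]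
        by (smt (verit) mult_nonneg_nonneg)
    next
      case 2
      have "Gf psi T X x \<tau> M w \<le> \<tau> * (e + dist z w) + real (length ws)" unfolding Gf_def
      proof (rule cInf_lower)
        show "\<tau> * (e + dist z w) + real (length ws) \<in> insert M {\<tau> * e + real (length ws) | ws e. chain psi T X x w ws e}"
          using chain.cm[OF 2(1) assms(4)] by blast
      qed (rule Gf_bdd[OF assms(1-3)])
      then show ?thesis using 2(2) by (simp add: algebra_simps)
    qed
  qed auto
  then show ?thesis by simp
qed

lemma Gf_jump:
  assumes "\<forall>s\<in>T. \<forall>z\<in>X. psi s z \<in> X" "\<tau> > 0" "M \<ge> 0" "s \<in> T"
  shows "Gf psi T X x \<tau> M (psi s z) \<le> Gf psi T X x \<tau> M z + 1"
proof -
  have "Gf psi T X x \<tau> M (psi s z) - 1 \<le> Gf psi T X x \<tau> M z"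
    unfolding Gf_def[of psi T X x \<tau> M z]
  proof (rule cInf_greatest)
    fix c assume "c \<in> insert M {\<tau> * e + real (length ws) | ws e. chain psi T X x z ws e}"
    then consider "c = M" | ws e where "chain psi T X x z ws e" "c = \<tau> * e + real (length ws)" by blast
    then show "Gf psi T X x \<tau> M (psi s z) - 1 \<le> c"
    proof cases
      case 1 then show ?thesis using Gf_range(2)[OF assms(1-3), of x "psi s z"] by simp
    next
      case 2
      have "Gf psi T X x \<tau> M (psi s z) \<le> \<tau> * e + real (length (s # ws))" unfolding Gf_def
      proof (rule cInf_lower)
        show "\<tau> * e + real (length (s # ws)) \<in> insert M {\<tau> * e + real (length ws) | ws e. chain psi T X x (psi s z) ws e}"
          using chain.cj[OF 2(1) assms(4)] by blast
      qed (rule Gf_bdd[OF assms(1-3)])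
      then show ?thesis using 2(2) by (simp add: algebra_simps)
    qed
  qed auto
  then show ?thesis by simp
qed


lemma le_twice_half: "(a::real) \<le> b \<Longrightarrow> a \<le> 2 * (b / 2)" by simp

lemma half_sum_le: "(m::real) \<le> u \<Longrightarrow> g \<le> u \<Longrightarrow> (m + g) / 2 \<le> u" by simp

lemma chain_exists:
  assumes maps: "\<forall>s\<in>T. \<forall>z\<in>X. psi s z \<in> X"
    and bk: "\<forall>s\<in>T. \<exists>s'\<in>T. \<forall>z\<in>X. psi s' (psi s z) = z"
    and tau: "\<tau> > 0" and R: "R \<ge> 0" and xX: "x \<in> X" and x'X: "x' \<in> X"
    and W: "warped_dist T psi X \<tau> x x' \<le> R"
  shows "\<exists>ws e. chain psi T X x x' ws e \<and> \<tau> * e + real (length ws) < 2 * R + 1"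
proof -
  define M where "M = 2 * R + 1"
  have M0: "M \<ge> 0" using R by (simp add: M_def)
  define G where "G = Gf psi T X x \<tau> M"
  have Gmove: "\<bar>G a - G b\<bar> \<le> \<tau> * dist a b" if "a \<in> X" "b \<in> X" for a b
    using Gf_move[OF maps tau M0 that(1), of x b] Gf_move[OF maps tau M0 that(2), of x a]
    unfolding G_def by (simp add: dist_commute)
  have Gjump: "\<bar>G a - G (psi s a)\<bar> \<le> 1" if aX: "a \<in> X" and sT: "s \<in> T" for a s
  proof -
    obtain s' where s': "s' \<in> T" "\<forall>z\<in>X. psi s' (psi s z) = z" using bk sT by blast
    have "G (psi s' (psi s a)) \<le> G (psi s a) + 1" unfolding G_def by (rule Gf_jump[OF maps tau M0 s'(1)])
    then have "G a \<le> G (psi s a) + 1" using s'(2) aX by simp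
    moreover have "G (psi s a) \<le> G a + 1" unfolding G_def by (rule Gf_jump[OF maps tau M0 sT])
    ultimately show ?thesis by simp
  qed
  define d0 where "d0 = (\<lambda>a b. (min (\<tau> * dist a b) 1 + \<bar>G a - G b\<bar>) / 2)"
  have mm: "is_metric_on X (\<lambda>a b. min (\<tau> * dist a b) 1)" by (rule min_metric[OF tau])
  have met: "is_metric_on X d0"
    unfolding is_metric_on_def d0_def
  proof (intro conjI ballI)
    fix a b c assume abc: "a \<in> X" "b \<in> X" "c \<in> X"
    have "min (\<tau> * dist a c) 1 \<le> min (\<tau> * dist a b) 1 + min (\<tau> * dist b c) 1"
      using mm abc unfolding is_metric_on_def by blast
    moreover have "\<bar>G a - G c\<bar> \<le> \<bar>G a - G b\<bar> + \<bar>G b - G c\<bar>" by simp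
    ultimately show "(min (\<tau> * dist a c) 1 + \<bar>G a - G c\<bar>) / 2
       \<le> (min (\<tau> * dist a b) 1 + \<bar>G a - G b\<bar>) / 2 + (min (\<tau> * dist b c) 1 + \<bar>G b - G c\<bar>) / 2"
      by argo
  next
    fix a b assume ab: "a \<in> X" "b \<in> X"
    have "0 \<le> min (\<tau> * dist a b) 1" using tau by simp
    then show "0 \<le> (min (\<tau> * dist a b) 1 + \<bar>G a - G b\<bar>) / 2" by simp
    show "(min (\<tau> * dist a b) 1 + \<bar>G a - G b\<bar>) / 2 = (min (\<tau> * dist b a) 1 + \<bar>G b - G a\<bar>) / 2"
      by (simp add: dist_commute abs_minus_commute)
    show "((min (\<tau> * dist a b) 1 + \<bar>G a - G b\<bar>) / 2 = 0) = (a = b)"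
    proof
      assume "(min (\<tau> * dist a b) 1 + \<bar>G a - G b\<bar>) / 2 = 0"
      then have "min (\<tau> * dist a b) 1 = 0" using \<open>0 \<le> min (\<tau> * dist a b) 1\<close> abs_ge_zero[of "G a - G b"] by argo
      then show "a = b" using tau by (auto simp: min_def split: if_splits)
    qed simp
  qed
  have le: "\<forall>a\<in>X. \<forall>b\<in>X. d0 a b \<le> \<tau> * dist a b"
  proof (intro ballI)
    fix a b assume ab: "a \<in> X" "b \<in> X"
    show "d0 a b \<le> \<tau> * dist a b"
      unfolding d0_def by (rule half_sum_le[OF min.cobounded1 Gmove[OF ab]])
  qed
  have le1: "\<forall>a\<in>X. \<forall>s\<in>T. d0 a (psi s a) \<le> 1"
  proof (intro ballI)
    fix a s assume ab: "a \<in> X" "s \<in> T"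
    show "d0 a (psi s a) \<le> 1"
      unfolding d0_def by (rule half_sum_le[OF min.cobounded2 Gjump[OF ab]])
  qed
  have A1: "d0 x x' \<le> R" using warped_ge[OF met le le1 xX x'X] W by (rule order_trans)
  have A2: "G x = 0" unfolding G_def by (rule Gf_base[OF maps tau M0 xX])
  have A3: "0 \<le> min (\<tau> * dist x x') 1" using tau by simp
  have "G x' \<le> \<bar>G x'\<bar>" by (rule abs_ge_self)
  then have "G x' \<le> \<bar>G x - G x'\<bar>" using A2 by simp
  then have "G x' \<le> min (\<tau> * dist x x') 1 + \<bar>G x - G x'\<bar>" using A3 by linarith
  then have "G x' \<le> 2 * d0 x x'" unfolding d0_def by (rule le_twice_half)
  then have "G x' \<le> 2 * R" using A1 by linarith
  then have lt: "G x' < M" unfolding M_def by linarith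
  have ne: "insert M {\<tau> * e + real (length ws) | ws e. chain psi T X x x' ws e} \<noteq> {}" by simp
  have "Inf (insert M {\<tau> * e + real (length ws) | ws e. chain psi T X x x' ws e}) < M"
    using lt unfolding G_def Gf_def .
  from cInf_lessD[OF ne this] obtain c where
    c1: "c \<in> insert M {\<tau> * e + real (length ws) | ws e. chain psi T X x x' ws e}" and c2: "c < M"
    by blast
  then have "c \<noteq> M" by simp
  with c1 have "c \<in> {\<tau> * e + real (length ws) | ws e. chain psi T X x x' ws e}" by simp
  then obtain ws e where "chain psi T X x x' ws e" "c = \<tau> * e + real (length ws)" by blast
  then show ?thesis using c2 unfolding M_def by blast
qed


lemma chain_x:
  assumes "chain psi T X x z ws e"
  shows "x \<in> X"
  using assms by (induction rule: chain.induct) auto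

definition om :: "('h \<Rightarrow> 'x \<Rightarrow> 'x) \<Rightarrow> 'h set \<Rightarrow> 'x::metric_space set \<Rightarrow> real \<Rightarrow> real" where
  "om psi T X r = Sup (insert 0 {dist (psi s a) (psi s b) | s a b. s \<in> T \<and> a \<in> X \<and> b \<in> X \<and> dist a b \<le> r})"

lemma om_bdd:
  assumes maps: "\<forall>s\<in>T. \<forall>z\<in>X. psi s z \<in> X" and bd: "bounded X"
  shows "bdd_above (insert 0 {dist (psi s a) (psi s b) | s a b. s \<in> T \<and> a \<in> X \<and> b \<in> X \<and> dist a b \<le> r})"
proof -
  obtain B where B: "\<forall>p\<in>X. \<forall>q\<in>X. dist p q \<le> B" using bd bounded_two_points by blast
  show ?thesis unfolding bdd_above_def
  proof (intro exI[of _ "max 0 B"] ballI)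
    fix c assume "c \<in> insert 0 {dist (psi s a) (psi s b) | s a b. s \<in> T \<and> a \<in> X \<and> b \<in> X \<and> dist a b \<le> r}"
    then consider "c = 0" | s a b where "c = dist (psi s a) (psi s b)" "s \<in> T" "a \<in> X" "b \<in> X"
      by blast
    then show "c \<le> max 0 B"
    proof cases
      case 2
      then have "psi s a \<in> X" "psi s b \<in> X" using maps by auto
      then show ?thesis using B 2(1) by (meson le_max_iff_disj)
    qed simp
  qed
qed

lemma om_ge:
  assumes maps: "\<forall>s\<in>T. \<forall>z\<in>X. psi s z \<in> X" and bd: "bounded X"
    and "s \<in> T" "a \<in> X" "b \<in> X" "dist a b \<le> r"
  shows "dist (psi s a) (psi s b) \<le> om psi T X r"
  unfolding om_def by (rule cSup_upper[OF _ om_bdd[OF maps bd]]) (use assms in blast)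

lemma om_nonneg: 
  assumes maps: "\<forall>s\<in>T. \<forall>z\<in>X. psi s z \<in> X" and bd: "bounded X"
  shows "0 \<le> om psi T X r"
  unfolding om_def by (rule cSup_upper[OF _ om_bdd[OF maps bd]]) simp

lemma om_mono:
  assumes maps: "\<forall>s\<in>T. \<forall>z\<in>X. psi s z \<in> X" and bd: "bounded X"
  shows "\<forall>r r'. r \<le> r' \<longrightarrow> om psi T X r \<le> om psi T X r'"
proof (intro allI impI)
  fix r r' :: real assume "r \<le> r'"
  then show "om psi T X r \<le> om psi T X r'"
    unfolding om_def
  proof (intro cSup_subset_mono om_bdd[OF maps bd] insert_mono subsetI)
    fix c assume "c \<in> {dist (psi s a) (psi s b) | s a b. s \<in> T \<and> a \<in> X \<and> b \<in> X \<and> dist a b \<le> r}"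
    then obtain s a b where sab: "c = dist (psi s a) (psi s b)" "s \<in> T" "a \<in> X" "b \<in> X" "dist a b \<le> r"
      by blast
    then have "dist a b \<le> r'" using \<open>r \<le> r'\<close> by linarith
    then show "c \<in> {dist (psi s a) (psi s b) | s a b. s \<in> T \<and> a \<in> X \<and> b \<in> X \<and> dist a b \<le> r'}"
      using sab by blast
  qed simp
qed

lemma finite_min_pos:
  assumes "finite T" "\<forall>s\<in>T. \<exists>\<rho>>0. P s \<rho>"
    "\<And>s \<rho> \<rho>'. P s \<rho> \<Longrightarrow> 0 < \<rho>' \<Longrightarrow> \<rho>' \<le> \<rho> \<Longrightarrow> P s \<rho>'"
  shows "\<exists>\<rho>>0. \<forall>s\<in>T. P s (\<rho>::real)"
  using assms(1,2)
proof (induction T rule: finite_induct)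
  case empty then show ?case by (intro exI[of _ 1]) auto
next
  case (insert a T)
  obtain r1 where r1: "r1 > 0" "\<forall>s\<in>T. P s r1" using insert by auto
  obtain r2 where r2: "r2 > 0" "P a r2" using insert.prems by auto
  show ?case
  proof (intro exI[of _ "min r1 r2"] conjI ballI)
    show "0 < min r1 r2" using r1 r2 by simp
    fix s assume "s \<in> insert a T"
    then show "P s (min r1 r2)" using r1 r2 assms(3)[of _ _ "min r1 r2"] by auto
  qed
qed

lemma om_small:
  assumes maps: "\<forall>s\<in>T. \<forall>z\<in>X. psi s z \<in> X" and cpt: "compact X" and fin: "finite T"
    and cont: "\<forall>s\<in>T. continuous_on X (psi s)" and eps: "\<epsilon> > 0"
  shows "\<exists>\<rho>>0. \<forall>r. r < \<rho> \<longrightarrow> om psi T X r \<le> \<epsilon>"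
proof -
  have bd: "bounded X" using cpt by (rule compact_imp_bounded)
  have "\<forall>s\<in>T. \<exists>\<rho>>0. \<forall>a\<in>X. \<forall>b\<in>X. dist b a < \<rho> \<longrightarrow> dist (psi s b) (psi s a) < \<epsilon>"
  proof
    fix s assume "s \<in> T"
    then have "uniformly_continuous_on X (psi s)" using cont cpt compact_uniformly_continuous by blast
    then show "\<exists>\<rho>>0. \<forall>a\<in>X. \<forall>b\<in>X. dist b a < \<rho> \<longrightarrow> dist (psi s b) (psi s a) < \<epsilon>"
      unfolding uniformly_continuous_on_def using eps by blast
  qed
  moreover have "\<And>s \<rho> \<rho>'. (\<forall>a\<in>X. \<forall>b\<in>X. dist b a < \<rho> \<longrightarrow> dist (psi s b) (psi s a) < \<epsilon>) \<Longrightarrow> 0 < \<rho>' \<Longrightarrow> \<rho>' \<le> \<rho> \<Longrightarrow>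
     (\<forall>a\<in>X. \<forall>b\<in>X. dist b a < \<rho>' \<longrightarrow> dist (psi s b) (psi s a) < \<epsilon>)"
    by (meson less_le_trans)
  ultimately obtain \<rho> where rho: "\<rho> > 0" "\<forall>s\<in>T. \<forall>a\<in>X. \<forall>b\<in>X. dist b a < \<rho> \<longrightarrow> dist (psi s b) (psi s a) < \<epsilon>"
    using finite_min_pos[OF fin, of "\<lambda>s \<rho>. \<forall>a\<in>X. \<forall>b\<in>X. dist b a < \<rho> \<longrightarrow> dist (psi s b) (psi s a) < \<epsilon>"]
    by blast
  show ?thesis
  proof (intro exI[of _ \<rho>] conjI allI impI)
    show "\<rho> > 0" by (rule rho(1))
    fix r assume r: "r < \<rho>"
    show "om psi T X r \<le> \<epsilon>" unfolding om_def
    proof (rule cSup_least)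
      fix c assume "c \<in> insert 0 {dist (psi s a) (psi s b) | s a b. s \<in> T \<and> a \<in> X \<and> b \<in> X \<and> dist a b \<le> r}"
      then consider "c = 0" | s a b where "c = dist (psi s a) (psi s b)" "s \<in> T" "a \<in> X" "b \<in> X" "dist a b \<le> r"
        by blast
      then show "c \<le> \<epsilon>"
      proof cases
        case 1 then show ?thesis using eps by simp
      next
        case 2
        have "dist a b < \<rho>" using 2 r by simp
        then have "dist (psi s a) (psi s b) < \<epsilon>" using rho(2) 2 by blast
        then show ?thesis using 2 by simp
      qed
    qed simp
  qed
qed

fun Phi :: "(real \<Rightarrow> real) \<Rightarrow> nat \<Rightarrow> real \<Rightarrow> real" where
  "Phi w 0 e = e"
| "Phi w (Suc k) e = e + w (Phi w k e)"

lemma Phi_mono: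
  assumes "\<forall>r r'. r \<le> r' \<longrightarrow> w r \<le> w r'" "e \<le> e'"
  shows "Phi w k e \<le> Phi w k e'"
  using assms(2)
proof (induction k)
  case (Suc k)
  then have "w (Phi w k e) \<le> w (Phi w k e')" using assms(1) by blast
  then show ?case using Suc by simp
qed simp

lemma Phi_add:
  assumes "\<forall>r r'. r \<le> r' \<longrightarrow> w r \<le> w r'" "0 \<le> d"
  shows "Phi w k e + d \<le> Phi w k (e + d)"
proof (cases k)
  case 0 then show ?thesis by simp
next
  case (Suc k')
  have "Phi w k' e \<le> Phi w k' (e + d)" using Phi_mono[OF assms(1)] assms(2) by simp
  then have "w (Phi w k' e) \<le> w (Phi w k' (e + d))" using assms(1) by blast
  then show ?thesis using Suc by simp
qed

lemma act_in:
  assumes maps: "\<forall>s\<in>T. \<forall>z\<in>X. psi s z \<in> X" "set ws \<subseteq> T" "x \<in> X"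
  shows "foldr psi ws x \<in> X"
  using assms(2) by (induction ws) (use maps assms(3) in auto)

lemma chain_bound:
  assumes ch: "chain psi T X x z ws e" and maps: "\<forall>s\<in>T. \<forall>z\<in>X. psi s z \<in> X" and bd: "bounded X"
  shows "dist z (foldr psi ws x) \<le> Phi (om psi T X) (length ws) e"
  using ch
proof (induction rule: chain.induct)
  case c0 then show ?case by simp
next
  case (cm z ws e w)
  have "dist w (foldr psi ws x) \<le> dist z (foldr psi ws x) + dist z w"
    using dist_triangle2[of w "foldr psi ws x" z] by (simp add: dist_commute add.commute)
  also have "\<dots> \<le> Phi (om psi T X) (length ws) e + dist z w" using cm.IH by simp
  also have "\<dots> \<le> Phi (om psi T X) (length ws) (e + dist z w)"
    by (rule Phi_add[OF om_mono[OF maps bd]]) simp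
  finally show ?case .
next
  case (cj z ws e s)
  have P: "z \<in> X \<and> e \<ge> 0 \<and> set ws \<subseteq> T" using chain_props[OF cj.hyps(1) maps] .
  have xX: "x \<in> X" using chain_x[OF cj.hyps(1)] .
  have AX: "foldr psi ws x \<in> X" using act_in[OF maps _ xX] P by blast
  have "dist (psi s z) (psi s (foldr psi ws x)) \<le> om psi T X (Phi (om psi T X) (length ws) e)"
    by (rule om_ge[OF maps bd cj.hyps(2)]) (use P AX cj.IH in auto)
  then show ?case using P by simp
qed

lemma Phi_small:
  assumes small: "\<forall>\<epsilon>>0. \<exists>\<rho>>0. \<forall>r. r < \<rho> \<longrightarrow> w r \<le> \<epsilon>"
  shows "\<epsilon> > 0 \<Longrightarrow> \<exists>\<eta>>0. \<forall>e. 0 \<le> e \<and> e < \<eta> \<longrightarrow> Phi w k e \<le> \<epsilon>"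
proof (induction k arbitrary: \<epsilon>)
  case 0 then show ?case by (intro exI[of _ \<epsilon>]) auto
next
  case (Suc k)
  obtain \<rho> where rho: "\<rho> > 0" "\<forall>r. r < \<rho> \<longrightarrow> w r \<le> \<epsilon> / 2" using small Suc.prems
    by (meson half_gt_zero)
  obtain \<eta>1 where eta1: "\<eta>1 > 0" "\<forall>e. 0 \<le> e \<and> e < \<eta>1 \<longrightarrow> Phi w k e \<le> \<rho> / 2"
    using Suc.IH[of "\<rho> / 2"] rho(1) by auto
  show ?case
  proof (intro exI[of _ "min \<eta>1 (\<epsilon> / 2)"] conjI allI impI)
    show "0 < min \<eta>1 (\<epsilon> / 2)" using eta1 Suc.prems by simp
    fix e assume e: "0 \<le> e \<and> e < min \<eta>1 (\<epsilon> / 2)"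
    then have "Phi w k e \<le> \<rho> / 2" using eta1 by simp
    then have "Phi w k e < \<rho>" using rho(1) by linarith
    then have "w (Phi w k e) \<le> \<epsilon> / 2" using rho(2) by blast
    then show "Phi w (Suc k) e \<le> \<epsilon>" using e by simp
  qed
qed

lemma Phi_small_unif:
  assumes small: "\<forall>\<epsilon>>0. \<exists>\<rho>>0. \<forall>r. r < \<rho> \<longrightarrow> w r \<le> \<epsilon>" and eps: "\<epsilon> > 0"
  shows "\<exists>\<eta>>0. \<forall>k\<le>K. \<forall>e. 0 \<le> e \<and> e < \<eta> \<longrightarrow> Phi w k e \<le> \<epsilon>"
proof (induction K)
  case 0 then show ?case using Phi_small[OF small eps, of 0] by auto
next
  case (Suc K)
  obtain \<eta>1 where e1: "\<eta>1 > 0" "\<forall>k\<le>K. \<forall>e. 0 \<le> e \<and> e < \<eta>1 \<longrightarrow> Phi w k e \<le> \<epsilon>" using Suc by blast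
  obtain \<eta>2 where e2: "\<eta>2 > 0" "\<forall>e. 0 \<le> e \<and> e < \<eta>2 \<longrightarrow> Phi w (Suc K) e \<le> \<epsilon>"
    using Phi_small[OF small eps, of "Suc K"] by blast
  show ?case
  proof (intro exI[of _ "min \<eta>1 \<eta>2"] conjI allI impI)
    show "0 < min \<eta>1 \<eta>2" using e1 e2 by simp
    fix k e assume "k \<le> Suc K" "0 \<le> e \<and> e < min \<eta>1 \<eta>2"
    then show "Phi w k e \<le> \<epsilon>" using e1 e2 by (cases "k = Suc K") auto
  qed
qed


lemma fca_maps: "free_cont_action G Y phi \<Longrightarrow> g \<in> carrier G \<Longrightarrow> y \<in> Y \<Longrightarrow> phi g y \<in> Y"
  unfolding free_cont_action_def by blast
lemma fca_one: "free_cont_action G Y phi \<Longrightarrow> y \<in> Y \<Longrightarrow> phi \<one>\<^bsub>G\<^esub> y = y"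
  unfolding free_cont_action_def by blast
lemma fca_mult: "free_cont_action G Y phi \<Longrightarrow> g \<in> carrier G \<Longrightarrow> h \<in> carrier G \<Longrightarrow> y \<in> Y \<Longrightarrow>
    phi (g \<otimes>\<^bsub>G\<^esub> h) y = phi g (phi h y)"
  unfolding free_cont_action_def by blast
lemma fca_cont: "free_cont_action G Y phi \<Longrightarrow> g \<in> carrier G \<Longrightarrow> continuous_on Y (phi g)"
  unfolding free_cont_action_def by blast
lemma fca_free: "free_cont_action G Y phi \<Longrightarrow> g \<in> carrier G \<Longrightarrow> y \<in> Y \<Longrightarrow> phi g y = y \<Longrightarrow> g = \<one>\<^bsub>G\<^esub>"
  unfolding free_cont_action_def by blast

lemma act_eq:
  assumes gr: "group H" and TC: "T \<subseteq> carrier H" and act: "free_cont_action H X psi"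
    and ws: "set ws \<subseteq> T" and xX: "x \<in> X"
  shows "psi (foldr (\<lambda>a b. a \<otimes>\<^bsub>H\<^esub> b) ws \<one>\<^bsub>H\<^esub>) x = foldr psi ws x"
  using ws
proof (induction ws)
  case Nil then show ?case using fca_one[OF act xX] by simp
next
  case (Cons s ws)
  have mo: "monoid H" using gr by (simp add: group.is_monoid)
  have P: "foldr (\<lambda>a b. a \<otimes>\<^bsub>H\<^esub> b) ws \<one>\<^bsub>H\<^esub> \<in> carrier H"
    by (rule foldr_prod_closed[OF mo]) (use Cons.prems TC in auto)
  have sC: "s \<in> carrier H" using Cons.prems TC by auto
  have "psi (s \<otimes>\<^bsub>H\<^esub> foldr (\<lambda>a b. a \<otimes>\<^bsub>H\<^esub> b) ws \<one>\<^bsub>H\<^esub>) x =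
     psi s (psi (foldr (\<lambda>a b. a \<otimes>\<^bsub>H\<^esub> b) ws \<one>\<^bsub>H\<^esub>) x)"
    using fca_mult[OF act sC P xX] .
  then show ?case using Cons by simp
qed

lemma key:
  assumes fg: "fg_group H T" and cpt: "compact X" and act: "free_cont_action H X psi"
    and xX: "x \<in> X" and x'X: "x' \<in> X" and R: "R \<ge> 0"
    and big: "\<forall>\<tau>0. \<exists>\<tau>. \<tau> \<ge> \<tau>0 \<and> \<tau> > 0 \<and> warped_dist T psi X \<tau> x x' \<le> R"
  shows "\<exists>ws. set ws \<subseteq> T \<and> length ws \<le> nat \<lceil>2 * R + 1\<rceil> \<and> x' = foldr psi ws x"
proof (rule ccontr)
  assume nt: "\<not> ?thesis"
  have gr: "group H" and TC: "T \<subseteq> carrier H" and sym: "\<forall>s\<in>T. inv\<^bsub>H\<^esub> s \<in> T" and fin: "finite T"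
    using fg unfolding fg_group_def by auto
  have maps: "\<forall>s\<in>T. \<forall>z\<in>X. psi s z \<in> X" using fca_maps[OF act] TC by blast
  have cont: "\<forall>s\<in>T. continuous_on X (psi s)" using fca_cont[OF act] TC by blast
  have bk: "\<forall>s\<in>T. \<exists>s'\<in>T. \<forall>z\<in>X. psi s' (psi s z) = z"
  proof
    fix s assume sT: "s \<in> T"
    have sC: "s \<in> carrier H" using sT TC by auto
    have "\<forall>z\<in>X. psi (inv\<^bsub>H\<^esub> s) (psi s z) = z"
    proof
      fix z assume zX: "z \<in> X"
      have "psi (inv\<^bsub>H\<^esub> s) (psi s z) = psi (inv\<^bsub>H\<^esub> s \<otimes>\<^bsub>H\<^esub> s) z"
        using fca_mult[OF act group.inv_closed[OF gr sC] sC zX] by simp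
      also have "\<dots> = psi \<one>\<^bsub>H\<^esub> z" using group.l_inv[OF gr sC] by simp
      also have "\<dots> = z" using fca_one[OF act zX] .
      finally show "psi (inv\<^bsub>H\<^esub> s) (psi s z) = z" .
    qed
    then show "\<exists>s'\<in>T. \<forall>z\<in>X. psi s' (psi s z) = z" using sym sT by blast
  qed
  have bd: "bounded X" using cpt by (rule compact_imp_bounded)
  define K where "K = nat \<lceil>2 * R + 1\<rceil>"
  define W where "W = {ws. set ws \<subseteq> T \<and> length ws \<le> K}"
  have finW: "finite W" unfolding W_def using fin by (rule finite_lists_length_le)
  have nW: "[] \<in> W" unfolding W_def by simp
  have neq: "\<forall>ws\<in>W. x' \<noteq> foldr psi ws x" using nt unfolding W_def K_def by blast
  define D where "D = (\<lambda>ws. dist x' (foldr psi ws x)) ` W"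
  have finD: "finite D" unfolding D_def using finW by simp
  have neD: "D \<noteq> {}" unfolding D_def using nW by blast
  define m where "m = Min D"
  have mD: "m \<in> D" unfolding m_def using finD neD by (rule Min_in)
  have m0: "m > 0"
  proof -
    from mD obtain ws where "ws \<in> W" "m = dist x' (foldr psi ws x)" unfolding D_def by blast
    then show ?thesis using neq by simp
  qed
  have mle: "\<forall>ws\<in>W. m \<le> dist x' (foldr psi ws x)"
  proof
    fix ws assume "ws \<in> W"
    then have "dist x' (foldr psi ws x) \<in> D" unfolding D_def by blast
    then show "m \<le> dist x' (foldr psi ws x)" unfolding m_def by (rule Min_le[OF finD])
  qed
  have small: "\<forall>\<epsilon>>0. \<exists>\<rho>>0. \<forall>r. r < \<rho> \<longrightarrow> om psi T X r \<le> \<epsilon>"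
    using om_small[OF maps cpt fin cont] by blast
  obtain \<eta> where eta: "\<eta> > 0" "\<forall>k\<le>K. \<forall>e. 0 \<le> e \<and> e < \<eta> \<longrightarrow> Phi (om psi T X) k e \<le> m / 2"
    using Phi_small_unif[OF small, of "m / 2" K] m0 by auto
  obtain \<tau> where tau: "\<tau> \<ge> (2 * R + 1) / \<eta> + 1" "\<tau> > 0" "warped_dist T psi X \<tau> x x' \<le> R"
    using big by blast
  obtain ws e where ch: "chain psi T X x x' ws e" and lt: "\<tau> * e + real (length ws) < 2 * R + 1"
    using chain_exists[OF maps bk tau(2) R xX x'X tau(3)] by blast
  have P: "x' \<in> X \<and> e \<ge> 0 \<and> set ws \<subseteq> T" using chain_props[OF ch maps] .
  have "0 \<le> \<tau> * e" using P tau(2) by simp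
  then have "real (length ws) < 2 * R + 1" using lt by linarith
  then have "real (length ws) \<le> real K" unfolding K_def using real_nat_ceiling_ge[of "2 * R + 1"] by linarith
  then have lenK: "length ws \<le> K" by simp
  have "(2 * R + 1) / \<eta> * \<eta> = 2 * R + 1" using eta(1) by simp
  moreover have "((2 * R + 1) / \<eta> + 1) * \<eta> \<le> \<tau> * \<eta>" using tau(1) eta(1) by (simp add: mult_right_mono)
  ultimately have "2 * R + 1 < \<tau> * \<eta>" using eta(1) by (simp add: algebra_simps)
  moreover have "\<tau> * e < 2 * R + 1" using lt by simp
  ultimately have "\<tau> * e < \<tau> * \<eta>" by linarith
  then have eeta: "e < \<eta>" using tau(2) by simp
  have "dist x' (foldr psi ws x) \<le> Phi (om psi T X) (length ws) e" by (rule chain_bound[OF ch maps bd])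
  also have "\<dots> \<le> m / 2" using eta(2) lenK P eeta by blast
  finally have "dist x' (foldr psi ws x) \<le> m / 2" .
  moreover have "ws \<in> W" unfolding W_def using P lenK by simp
  ultimately have "m \<le> m / 2" using mle by fastforce
  then show False using m0 by linarith
qed


lemma gen_step:
  assumes fgG: "fg_group G S" and fgH: "fg_group H T" and cpt: "compact X"
    and actG: "free_cont_action G Y phi" and actH: "free_cont_action H X psi"
    and FY: "\<forall>y\<in>Y. F y \<in> X" and Cc: "Cc \<ge> 0" and Ac: "Ac \<ge> 0"
    and bound: "\<forall>\<tau>0. \<exists>\<tau> t. \<tau> \<ge> \<tau>0 \<and> \<tau> > 0 \<and> t > 0 \<and>
       (\<forall>a\<in>Y. \<forall>b\<in>Y. warped_dist T psi X \<tau> (F a) (F b) \<le> Cc * warped_dist S phi Y t a b + Ac)"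
  shows "\<forall>s\<in>S. \<forall>y\<in>Y. \<exists>h\<in>carrier H. word_length H T h \<le> nat \<lceil>2 * (Cc + Ac) + 1\<rceil> \<and> F (phi s y) = psi h (F y)"
proof (intro ballI)
  fix s y assume sS: "s \<in> S" and yY: "y \<in> Y"
  have SC: "S \<subseteq> carrier G" using fgG unfolding fg_group_def by blast
  have grH: "group H" and TC: "T \<subseteq> carrier H" using fgH unfolding fg_group_def by auto
  have moH: "monoid H" using grH by (simp add: group.is_monoid)
  have syY: "phi s y \<in> Y" using fca_maps[OF actG _ yY] sS SC by blast
  have big: "\<forall>\<tau>0. \<exists>\<tau>. \<tau> \<ge> \<tau>0 \<and> \<tau> > 0 \<and> warped_dist T psi X \<tau> (F y) (F (phi s y)) \<le> Cc + Ac"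
  proof
    fix \<tau>0
    obtain \<tau> t where tt: "\<tau> \<ge> \<tau>0" "\<tau> > 0" "t > 0"
      "\<forall>a\<in>Y. \<forall>b\<in>Y. warped_dist T psi X \<tau> (F a) (F b) \<le> Cc * warped_dist S phi Y t a b + Ac"
      using bound by blast
    have "warped_dist T psi X \<tau> (F y) (F (phi s y)) \<le> Cc * warped_dist S phi Y t y (phi s y) + Ac"
      using tt(4) yY syY by blast
    also have "\<dots> \<le> Cc * 1 + Ac"
      using mult_left_mono[OF warped_le_1[OF tt(3) yY sS, of phi] Cc] by simp
    finally show "\<exists>\<tau>. \<tau> \<ge> \<tau>0 \<and> \<tau> > 0 \<and> warped_dist T psi X \<tau> (F y) (F (phi s y)) \<le> Cc + Ac"
      using tt by auto
  qed
  obtain ws where ws: "set ws \<subseteq> T" "length ws \<le> nat \<lceil>2 * (Cc + Ac) + 1\<rceil>" "F (phi s y) = foldr psi ws (F y)"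
    using key[OF fgH cpt actH _ _ _ big] FY yY syY Cc Ac by auto
  define h where "h = foldr (\<lambda>a b. a \<otimes>\<^bsub>H\<^esub> b) ws \<one>\<^bsub>H\<^esub>"
  have hC: "h \<in> carrier H" unfolding h_def by (rule foldr_prod_closed[OF moH]) (use ws TC in auto)
  have "word_length H T h \<le> length ws" unfolding h_def by (rule wl_le[OF ws(1)])
  moreover have "psi h (F y) = foldr psi ws (F y)" unfolding h_def
    by (rule act_eq[OF grH TC actH ws(1)]) (use FY yY in auto)
  ultimately show "\<exists>h\<in>carrier H. word_length H T h \<le> nat \<lceil>2 * (Cc + Ac) + 1\<rceil> \<and> F (phi s y) = psi h (F y)"
    using hC ws by (intro bexI[of _ h]) auto
qed

lemma extend:
  assumes fgG: "fg_group G S" and fgH: "fg_group H T"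
    and actG: "free_cont_action G Y phi" and actH: "free_cont_action H X psi"
    and FY: "\<forall>y\<in>Y. F y \<in> X"
    and step: "\<forall>s\<in>S. \<forall>y\<in>Y. \<exists>h\<in>carrier H. word_length H T h \<le> K \<and> F (phi s y) = psi h (F y)"
  shows "\<forall>\<gamma>\<in>carrier G. \<forall>y\<in>Y. \<exists>h\<in>carrier H. word_length H T h \<le> K * word_length G S \<gamma> \<and> F (phi \<gamma> y) = psi h (F y)"
proof -
  have grG: "group G" and SC: "S \<subseteq> carrier G" using fgG unfolding fg_group_def by auto
  have grH: "group H" using fgH unfolding fg_group_def by auto
  have moG: "monoid G" using grG by (simp add: group.is_monoid)
  have moH: "monoid H" using grH by (simp add: group.is_monoid)
  have W: "\<forall>y\<in>Y. \<exists>h\<in>carrier H. word_length H T h \<le> K * length ws \<and>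
      F (phi (foldr (\<lambda>a b. a \<otimes>\<^bsub>G\<^esub> b) ws \<one>\<^bsub>G\<^esub>) y) = psi h (F y)" if "set ws \<subseteq> S" for ws
    using that
  proof (induction ws)
    case Nil
    have "word_length H T \<one>\<^bsub>H\<^esub> \<le> 0" using wl_le[of "[]" T H] by simp
    then show ?case using fca_one[OF actG] fca_one[OF actH] FY
      by (intro ballI bexI[of _ "\<one>\<^bsub>H\<^esub>"]) (auto simp: monoid.one_closed[OF moH])
  next
    case (Cons s ws)
    show ?case
    proof
      fix y assume yY: "y \<in> Y"
      define P where "P = foldr (\<lambda>a b. a \<otimes>\<^bsub>G\<^esub> b) ws \<one>\<^bsub>G\<^esub>"
      have PC: "P \<in> carrier G" unfolding P_def by (rule foldr_prod_closed[OF moG]) (use Cons.prems SC in auto)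
      have sC: "s \<in> carrier G" using Cons.prems SC by auto
      obtain h2 where h2: "h2 \<in> carrier H" "word_length H T h2 \<le> K * length ws" "F (phi P y) = psi h2 (F y)"
        using Cons.IH Cons.prems yY unfolding P_def by auto
      have y1: "phi P y \<in> Y" using fca_maps[OF actG PC yY] .
      have sS: "s \<in> S" using Cons.prems by simp
      obtain h1 where h1: "h1 \<in> carrier H" "word_length H T h1 \<le> K" "F (phi s (phi P y)) = psi h1 (F (phi P y))"
        using bspec[OF bspec[OF step sS] y1] by blast
      have "F (phi (s \<otimes>\<^bsub>G\<^esub> P) y) = F (phi s (phi P y))" using fca_mult[OF actG sC PC yY] by simp
      also have "\<dots> = psi h1 (psi h2 (F y))" using h1(3) h2(3) by simp
      also have "\<dots> = psi (h1 \<otimes>\<^bsub>H\<^esub> h2) (F y)" using fca_mult[OF actH h1(1) h2(1)] FY yY by simp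
      finally have eq: "F (phi (s \<otimes>\<^bsub>G\<^esub> P) y) = psi (h1 \<otimes>\<^bsub>H\<^esub> h2) (F y)" .
      have "word_length H T (h1 \<otimes>\<^bsub>H\<^esub> h2) \<le> word_length H T h1 + word_length H T h2"
        by (rule wl_mult[OF fgH h1(1) h2(1)])
      also have "\<dots> \<le> K * length (s # ws)" using h1(2) h2(2) by simp
      finally show "\<exists>h\<in>carrier H. word_length H T h \<le> K * length (s # ws) \<and>
         F (phi (foldr (\<lambda>a b. a \<otimes>\<^bsub>G\<^esub> b) (s # ws) \<one>\<^bsub>G\<^esub>) y) = psi h (F y)"
        using eq monoid.m_closed[OF moH h1(1) h2(1)] unfolding P_def by auto
    qed
  qed
  show ?thesis
  proof (intro ballI)
    fix \<gamma> y assume gC: "\<gamma> \<in> carrier G" and yY: "y \<in> Y"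
    obtain ws where ws: "length ws = word_length G S \<gamma>" "set ws \<subseteq> S" "foldr (\<lambda>a b. a \<otimes>\<^bsub>G\<^esub> b) ws \<one>\<^bsub>G\<^esub> = \<gamma>"
      using fg_wl_attained[OF fgG gC] by blast
    show "\<exists>h\<in>carrier H. word_length H T h \<le> K * word_length G S \<gamma> \<and> F (phi \<gamma> y) = psi h (F y)"
      using W[OF ws(2)] yY ws by auto
  qed
qed

lemma fca_unique:
  assumes gr: "group H" and act: "free_cont_action H X psi"
    and "h \<in> carrier H" "h' \<in> carrier H" "x \<in> X" "psi h x = psi h' x"
  shows "h = h'"
proof -
  have mo: "monoid H" using gr by (rule group.is_monoid)
  have ih: "inv\<^bsub>H\<^esub> h' \<in> carrier H" using group.inv_closed[OF gr assms(4)] .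
  have c: "inv\<^bsub>H\<^esub> h' \<otimes>\<^bsub>H\<^esub> h \<in> carrier H"
    by (rule monoid.m_closed[OF mo ih assms(3)])
  have e1: "psi (inv\<^bsub>H\<^esub> h' \<otimes>\<^bsub>H\<^esub> h) x = psi (inv\<^bsub>H\<^esub> h') (psi h x)" using fca_mult[OF act ih assms(3,5)] .
  have e2: "psi (inv\<^bsub>H\<^esub> h' \<otimes>\<^bsub>H\<^esub> h') x = psi (inv\<^bsub>H\<^esub> h') (psi h' x)" using fca_mult[OF act ih assms(4,5)] .
  have e3: "psi (inv\<^bsub>H\<^esub> h' \<otimes>\<^bsub>H\<^esub> h') x = x" using group.l_inv[OF gr assms(4)] fca_one[OF act assms(5)] by simp
  have "psi (inv\<^bsub>H\<^esub> h' \<otimes>\<^bsub>H\<^esub> h) x = x" using e1 e2 e3 assms(6) by simp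
  then have one: "inv\<^bsub>H\<^esub> h' \<otimes>\<^bsub>H\<^esub> h = \<one>\<^bsub>H\<^esub>" by (rule fca_free[OF act c assms(5)])
  have "h = \<one>\<^bsub>H\<^esub> \<otimes>\<^bsub>H\<^esub> h" using monoid.l_one[OF mo assms(3)] by simp
  also have "\<dots> = (h' \<otimes>\<^bsub>H\<^esub> inv\<^bsub>H\<^esub> h') \<otimes>\<^bsub>H\<^esub> h" using group.r_inv[OF gr assms(4)] by simp
  also have "\<dots> = h' \<otimes>\<^bsub>H\<^esub> (inv\<^bsub>H\<^esub> h' \<otimes>\<^bsub>H\<^esub> h)" using monoid.m_assoc[OF mo assms(4) ih assms(3)] .
  also have "\<dots> = h'" using one monoid.r_one[OF mo assms(4)] by simp
  finally show ?thesis .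
qed

lemma wl_ball_finite:
  assumes fg: "fg_group H T"
  shows "finite {h\<in>carrier H. word_length H T h \<le> n}"
proof -
  have fin: "finite T" using fg unfolding fg_group_def by auto
  have "{h\<in>carrier H. word_length H T h \<le> n} \<subseteq>
      (\<lambda>ws. foldr (\<lambda>a b. a \<otimes>\<^bsub>H\<^esub> b) ws \<one>\<^bsub>H\<^esub>) ` {ws. set ws \<subseteq> T \<and> length ws \<le> n}"
  proof
    fix h assume "h \<in> {h\<in>carrier H. word_length H T h \<le> n}"
    then obtain ws where "length ws = word_length H T h" "set ws \<subseteq> T" "foldr (\<lambda>a b. a \<otimes>\<^bsub>H\<^esub> b) ws \<one>\<^bsub>H\<^esub> = h"
      "word_length H T h \<le> n"
      using fg_wl_attained[OF fg] by blast
    then show "h \<in> (\<lambda>ws. foldr (\<lambda>a b. a \<otimes>\<^bsub>H\<^esub> b) ws \<one>\<^bsub>H\<^esub>) ` {ws. set ws \<subseteq> T \<and> length ws \<le> n}"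
      by (intro image_eqI[of _ _ ws]) auto
  qed
  then show ?thesis using finite_lists_length_le[OF fin] by (rule finite_subset[OF _ finite_imageI])
qed


lemma cont_discrete:
  assumes into: "\<forall>\<gamma>\<in>A. \<forall>y\<in>Y. d \<gamma> y \<in> B"
    and op: "\<forall>\<gamma>\<in>A. \<forall>U. openin (top_of_set Y) {y\<in>Y. d \<gamma> y \<in> U}"
  shows "continuous_map (prod_topology (discrete_topology A) (top_of_set Y)) (discrete_topology B) (\<lambda>(\<gamma>, y). d \<gamma> y)"
  unfolding continuous_map_def
proof (intro conjI allI impI)
  show "(\<lambda>(\<gamma>, y). d \<gamma> y) \<in> topspace (prod_topology (discrete_topology A) (top_of_set Y)) \<rightarrow> topspace (discrete_topology B)"
    using into by auto
  fix U assume "openin (discrete_topology B) U"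
  have eq: "{x \<in> topspace (prod_topology (discrete_topology A) (top_of_set Y)). (case x of (\<gamma>, y) \<Rightarrow> d \<gamma> y) \<in> U}
      = (\<Union>\<gamma>\<in>A. {\<gamma>} \<times> {y\<in>Y. d \<gamma> y \<in> U})" by auto
  have "openin (prod_topology (discrete_topology A) (top_of_set Y)) (\<Union>\<gamma>\<in>A. {\<gamma>} \<times> {y\<in>Y. d \<gamma> y \<in> U})"
  proof (rule openin_Union)
    fix S assume "S \<in> (\<lambda>\<gamma>. {\<gamma>} \<times> {y\<in>Y. d \<gamma> y \<in> U}) ` A"
    then obtain \<gamma> where g: "\<gamma> \<in> A" "S = {\<gamma>} \<times> {y\<in>Y. d \<gamma> y \<in> U}" by blast
    have "openin (discrete_topology A) {\<gamma>}" using g(1) by simp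
    then show "openin (prod_topology (discrete_topology A) (top_of_set Y)) S"
      unfolding g(2) openin_prod_Times_iff using op g(1) by blast
  qed
  then show "openin (prod_topology (discrete_topology A) (top_of_set Y))
     {x \<in> topspace (prod_topology (discrete_topology A) (top_of_set Y)). (case x of (\<gamma>, y) \<Rightarrow> d \<gamma> y) \<in> U}"
    unfolding eq .
qed

lemma le_mult_from_div:
  assumes "u / (C::real) - A \<le> v" "C \<ge> 1"
  shows "u \<le> C * v + C * A"
proof -
  have "u / C \<le> v + A" using assms(1) by linarith
  then have "u \<le> (v + A) * C" using assms(2) by (simp add: pos_divide_le_eq)
  then show ?thesis by (simp add: algebra_simps)
qed

theorem corollary4p5:
  fixes G :: "('g, 'c) monoid_scheme" and S :: "'g set"
    and H :: "('h, 'e) monoid_scheme" and T :: "'h set"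
    and Y :: "'y::metric_space set" and X :: "'x::metric_space set"
    and phi :: "'g \<Rightarrow> 'y \<Rightarrow> 'y" and psi :: "'h \<Rightarrow> 'x \<Rightarrow> 'x"
    and f :: "'y \<Rightarrow> 'x" and I :: "'i set" and t tau :: "'i \<Rightarrow> real"
    and C A :: real
  assumes "fg_group G S" and "fg_group H T"
    and "compact Y" and "compact X"
    and "free_cont_action G Y phi" and "free_cont_action H X psi"
    and "\<exists>g. homeomorphism Y X f g"
    and "t ` I = {0<..}" and "tau ` I = {0<..}"
    and "C \<ge> 1" and "A \<ge> 0"
    and "\<forall>i\<in>I. is_qi C A Y (warped_dist S phi Y (t i)) X (warped_dist T psi X (tau i)) f"
  shows "\<exists>delta :: 'g \<Rightarrow> 'y \<Rightarrow> 'h.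
     (\<forall>\<gamma>\<in>carrier G. \<forall>y\<in>Y. delta \<gamma> y \<in> carrier H) \<and>
     continuous_map (prod_topology (discrete_topology (carrier G)) (top_of_set Y))
        (discrete_topology (carrier H)) (\<lambda>(\<gamma>, y). delta \<gamma> y) \<and>
     (\<forall>\<gamma>1\<in>carrier G. \<forall>\<gamma>2\<in>carrier G. \<forall>y\<in>Y.
        delta \<gamma>2 (phi \<gamma>1 y) \<otimes>\<^bsub>H\<^esub> delta \<gamma>1 y = delta (\<gamma>2 \<otimes>\<^bsub>G\<^esub> \<gamma>1) y) \<and>
     (\<forall>y\<in>Y. bij_betw (\<lambda>\<gamma>. delta \<gamma> y) (carrier G) (carrier H)) \<and>
     (\<exists>C'\<ge>1. \<exists>A'\<ge>0. \<forall>\<gamma>\<in>carrier G. \<forall>y\<in>Y.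
        real (word_length G S \<gamma>) / C' - A' \<le> real (word_length H T (delta \<gamma> y)) \<and>
        real (word_length H T (delta \<gamma> y)) \<le> C' * real (word_length G S \<gamma>) + A')"
proof -
  note fgG = assms(1) and fgH = assms(2) and cptY = assms(3) and cptX = assms(4)
    and actG = assms(5) and actH = assms(6) and C1 = assms(10) and A0 = assms(11)
  obtain g where hom: "homeomorphism Y X f g" using assms(7) by blast
  have gf: "\<forall>y\<in>Y. g (f y) = y" using hom unfolding homeomorphism_def by blast
  have fg: "\<forall>x\<in>X. f (g x) = x" using hom unfolding homeomorphism_def by blast
  have fX: "\<forall>y\<in>Y. f y \<in> X" using hom unfolding homeomorphism_def by blast
  have gY: "\<forall>x\<in>X. g x \<in> Y" using hom unfolding homeomorphism_def by blast
  have contf: "continuous_on Y f" using hom unfolding homeomorphism_def by blast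
  have grG: "group G" and SC: "S \<subseteq> carrier G" using fgG unfolding fg_group_def by auto
  have grH: "group H" and TC: "T \<subseteq> carrier H" using fgH unfolding fg_group_def by auto
  have moG: "monoid G" using grG by (rule group.is_monoid)
  have moH: "monoid H" using grH by (rule group.is_monoid)
  have qi: "\<forall>z\<in>Y. \<forall>z'\<in>Y. warped_dist S phi Y (t i) z z' / C - A \<le> warped_dist T psi X (tau i) (f z) (f z')
      \<and> warped_dist T psi X (tau i) (f z) (f z') \<le> C * warped_dist S phi Y (t i) z z' + A" if "i \<in> I" for i
  proof -
    have "is_qi C A Y (warped_dist S phi Y (t i)) X (warped_dist T psi X (tau i)) f" using assms(12) that by blast
    then show ?thesis unfolding is_qi_def by (elim conjE)
  qed
  have C0: "C \<ge> 0" using C1 by simp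
  have bound1: "\<forall>\<tau>0. \<exists>\<tau> t'. \<tau> \<ge> \<tau>0 \<and> \<tau> > 0 \<and> t' > 0 \<and>
       (\<forall>a\<in>Y. \<forall>b\<in>Y. warped_dist T psi X \<tau> (f a) (f b) \<le> C * warped_dist S phi Y t' a b + A)"
  proof
    fix \<tau>0 :: real
    have "max \<tau>0 1 \<in> tau ` I" using assms(9) by simp
    then obtain i where i0: "max \<tau>0 1 = tau i" "i \<in> I" by (rule imageE)
    then have i: "i \<in> I" "tau i = max \<tau>0 1" by simp_all
    have "t i \<in> {0<..}" using assms(8) i(1) by blast
    then have ti: "t i > 0" by simp
    show "\<exists>\<tau> t'. \<tau> \<ge> \<tau>0 \<and> \<tau> > 0 \<and> t' > 0 \<and>
       (\<forall>a\<in>Y. \<forall>b\<in>Y. warped_dist T psi X \<tau> (f a) (f b) \<le> C * warped_dist S phi Y t' a b + A)"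
    proof (rule exI[of _ "tau i"], rule exI[of _ "t i"], intro conjI)
      show "tau i \<ge> \<tau>0" using i(2) by simp
      show "tau i > 0" using i(2) by simp
      show "t i > 0" by (rule ti)
      show "\<forall>a\<in>Y. \<forall>b\<in>Y. warped_dist T psi X (tau i) (f a) (f b) \<le> C * warped_dist S phi Y (t i) a b + A"
        using qi[OF i(1)] by blast
    qed
  qed
  have bound2: "\<forall>\<tau>0. \<exists>t' \<tau>. t' \<ge> \<tau>0 \<and> t' > 0 \<and> \<tau> > 0 \<and>
       (\<forall>a\<in>X. \<forall>b\<in>X. warped_dist S phi Y t' (g a) (g b) \<le> C * warped_dist T psi X \<tau> a b + C * A)"
  proof
    fix \<tau>0 :: real
    have "max \<tau>0 1 \<in> t ` I" using assms(8) by simp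
    then obtain i where i0: "max \<tau>0 1 = t i" "i \<in> I" by (rule imageE)
    then have i: "i \<in> I" "t i = max \<tau>0 1" by simp_all
    have "tau i \<in> {0<..}" using assms(9) i(1) by blast
    then have ti: "tau i > 0" by simp
    have hb: "\<forall>a\<in>X. \<forall>b\<in>X. warped_dist S phi Y (t i) (g a) (g b) \<le> C * warped_dist T psi X (tau i) a b + C * A"
    proof (intro ballI)
      fix a b assume ab: "a \<in> X" "b \<in> X"
      have "warped_dist S phi Y (t i) (g a) (g b) / C - A \<le> warped_dist T psi X (tau i) (f (g a)) (f (g b))"
        using qi[OF i(1)] gY ab by blast
      then have "warped_dist S phi Y (t i) (g a) (g b) / C - A \<le> warped_dist T psi X (tau i) a b"
        using fg ab by simp
      then show "warped_dist S phi Y (t i) (g a) (g b) \<le> C * warped_dist T psi X (tau i) a b + C * A"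
        by (rule le_mult_from_div[OF _ C1])
    qed
    show "\<exists>t' \<tau>. t' \<ge> \<tau>0 \<and> t' > 0 \<and> \<tau> > 0 \<and>
       (\<forall>a\<in>X. \<forall>b\<in>X. warped_dist S phi Y t' (g a) (g b) \<le> C * warped_dist T psi X \<tau> a b + C * A)"
    proof (rule exI[of _ "t i"], rule exI[of _ "tau i"], intro conjI)
      show "t i \<ge> \<tau>0" using i(2) by simp
      show "t i > 0" using i(2) by simp
      show "tau i > 0" by (rule ti)
      show "\<forall>a\<in>X. \<forall>b\<in>X. warped_dist S phi Y (t i) (g a) (g b) \<le> C * warped_dist T psi X (tau i) a b + C * A"
        by (rule hb)
    qed
  qed
  define K1 where "K1 = nat \<lceil>2 * (C + A) + 1\<rceil>"
  define K2 where "K2 = nat \<lceil>2 * (C + C * A) + 1\<rceil>"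
  have CA0: "C * A \<ge> 0" using C0 A0 by simp
  have ext1: "\<forall>\<gamma>\<in>carrier G. \<forall>y\<in>Y. \<exists>h\<in>carrier H. word_length H T h \<le> K1 * word_length G S \<gamma> \<and> f (phi \<gamma> y) = psi h (f y)"
    unfolding K1_def
    by (rule extend[OF fgG fgH actG actH fX gen_step[OF fgG fgH cptX actG actH fX C0 A0 bound1]])
  have ext2: "\<forall>h\<in>carrier H. \<forall>x\<in>X. \<exists>\<gamma>\<in>carrier G. word_length G S \<gamma> \<le> K2 * word_length H T h \<and> g (psi h x) = phi \<gamma> (g x)"
    unfolding K2_def
    by (rule extend[OF fgH fgG actH actG gY gen_step[OF fgH fgG cptY actH actG gY C0 CA0 bound2]])
  define delta where "delta = (\<lambda>\<gamma> y. THE h. h \<in> carrier H \<and> psi h (f y) = f (phi \<gamma> y))"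
  have deq: "delta \<gamma> y = h" if "\<gamma> \<in> carrier G" "y \<in> Y" "h \<in> carrier H" "psi h (f y) = f (phi \<gamma> y)" for \<gamma> y h
    unfolding delta_def
  proof (rule the_equality)
    show "h \<in> carrier H \<and> psi h (f y) = f (phi \<gamma> y)" using that by blast
    fix h' assume h': "h' \<in> carrier H \<and> psi h' (f y) = f (phi \<gamma> y)"
    have e: "psi h' (f y) = psi h (f y)" using h' that(4) by simp
    have fy: "f y \<in> X" using fX that(2) by blast
    show "h' = h" using h' fca_unique[OF grH actH _ that(3) fy e] by blast
  qed
  have dprop: "delta \<gamma> y \<in> carrier H \<and> psi (delta \<gamma> y) (f y) = f (phi \<gamma> y) \<and>
      word_length H T (delta \<gamma> y) \<le> K1 * word_length G S \<gamma>" if gy: "\<gamma> \<in> carrier G" "y \<in> Y" for \<gamma> y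
  proof -
    obtain h where h: "h \<in> carrier H" "word_length H T h \<le> K1 * word_length G S \<gamma>" "f (phi \<gamma> y) = psi h (f y)"
      using bspec[OF bspec[OF ext1 gy(1)] gy(2)] by blast
    have "delta \<gamma> y = h" using deq[OF gy h(1)] h(3) by simp
    then show ?thesis using h by simp
  qed
  have fyX: "f y \<in> X" if "y \<in> Y" for y using fX that by blast
  have dC: "\<forall>\<gamma>\<in>carrier G. \<forall>y\<in>Y. delta \<gamma> y \<in> carrier H" using dprop by blast
  have opn: "\<forall>\<gamma>\<in>carrier G. \<forall>U. openin (top_of_set Y) {y\<in>Y. delta \<gamma> y \<in> U}"
  proof (intro ballI allI)
    fix \<gamma> U assume gC: "\<gamma> \<in> carrier G"
    define B where "B = {h\<in>carrier H. word_length H T h \<le> K1 * word_length G S \<gamma>}"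
    have finB: "finite B" unfolding B_def by (rule wl_ball_finite[OF fgH])
    define E where "E = (\<lambda>h. {y\<in>Y. psi h (f y) = f (phi \<gamma> y)})"
    have clE: "closedin (top_of_set Y) (E h)" if hC: "h \<in> carrier H" for h
    proof -
      have c1: "continuous_on Y (\<lambda>y. psi h (f y))"
        by (rule continuous_on_compose2[OF fca_cont[OF actH hC] contf]) (use fX in blast)
      have c2: "continuous_on Y (\<lambda>y. f (phi \<gamma> y))"
        by (rule continuous_on_compose2[OF contf fca_cont[OF actG gC]]) (use fca_maps[OF actG gC] in blast)
      have "closedin (top_of_set Y) {y \<in> topspace (top_of_set Y). psi h (f y) = f (phi \<gamma> y)}"
        by (rule closedin_continuous_maps_eq[OF Hausdorff_space_euclidean]) (use c1 c2 in simp_all)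
      then show ?thesis unfolding E_def by simp
    qed
    have eq: "{y\<in>Y. delta \<gamma> y \<in> U} = Y - \<Union>(E ` (B - U))"
    proof (intro equalityI subsetI)
      fix y assume y: "y \<in> {y\<in>Y. delta \<gamma> y \<in> U}"
      have yY: "y \<in> Y" and dU: "delta \<gamma> y \<in> U" using y by auto
      have nE: "y \<notin> E h" if hBU: "h \<in> B - U" for h
      proof
        assume "y \<in> E h"
        then have e: "psi h (f y) = f (phi \<gamma> y)" unfolding E_def by simp
        have hC: "h \<in> carrier H" using hBU unfolding B_def by simp
        have "delta \<gamma> y = h" by (rule deq[OF gC yY hC e])
        then show False using dU hBU by simp
      qed
      show "y \<in> Y - \<Union>(E ` (B - U))" using yY nE by blast
    next
      fix y assume y: "y \<in> Y - \<Union>(E ` (B - U))"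
      then have yY: "y \<in> Y" by simp
      have dB: "delta \<gamma> y \<in> B" unfolding B_def using dprop[OF gC yY] by simp
      have dE: "y \<in> E (delta \<gamma> y)" unfolding E_def using dprop[OF gC yY] yY by simp
      have "delta \<gamma> y \<in> U"
      proof (rule ccontr)
        assume "delta \<gamma> y \<notin> U"
        then have "y \<in> \<Union>(E ` (B - U))" using dB dE by blast
        then show False using y by simp
      qed
      then show "y \<in> {y\<in>Y. delta \<gamma> y \<in> U}" using yY by simp
    qed
    have finE: "finite (E ` (B - U))" using finB by simp
    have clE2: "\<And>T'. T' \<in> E ` (B - U) \<Longrightarrow> closedin (top_of_set Y) T'"
      using clE unfolding B_def by blast
    have "closedin (top_of_set Y) (\<Union>(E ` (B - U)))" by (rule closedin_Union[OF finE clE2])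
    then show "openin (top_of_set Y) {y\<in>Y. delta \<gamma> y \<in> U}" unfolding eq
      by (rule openin_diff[OF openin_subtopology_self])
  qed
  have cont: "continuous_map (prod_topology (discrete_topology (carrier G)) (top_of_set Y))
        (discrete_topology (carrier H)) (\<lambda>(\<gamma>, y). delta \<gamma> y)"
    by (rule cont_discrete[OF dC opn])
  have coc: "\<forall>\<gamma>1\<in>carrier G. \<forall>\<gamma>2\<in>carrier G. \<forall>y\<in>Y.
        delta \<gamma>2 (phi \<gamma>1 y) \<otimes>\<^bsub>H\<^esub> delta \<gamma>1 y = delta (\<gamma>2 \<otimes>\<^bsub>G\<^esub> \<gamma>1) y"
  proof (intro ballI)
    fix \<gamma>1 \<gamma>2 y assume g1: "\<gamma>1 \<in> carrier G" and g2: "\<gamma>2 \<in> carrier G" and yY: "y \<in> Y"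
    have y1: "phi \<gamma>1 y \<in> Y" by (rule fca_maps[OF actG g1 yY])
    note d1 = dprop[OF g1 yY] and d2 = dprop[OF g2 y1]
    have d1C: "delta \<gamma>1 y \<in> carrier H" using d1 by simp
    have d2C: "delta \<gamma>2 (phi \<gamma>1 y) \<in> carrier H" using d2 by simp
    have g21: "\<gamma>2 \<otimes>\<^bsub>G\<^esub> \<gamma>1 \<in> carrier G" by (rule monoid.m_closed[OF moG g2 g1])
    have c: "delta \<gamma>2 (phi \<gamma>1 y) \<otimes>\<^bsub>H\<^esub> delta \<gamma>1 y \<in> carrier H" by (rule monoid.m_closed[OF moH d2C d1C])
    have "psi (delta \<gamma>2 (phi \<gamma>1 y) \<otimes>\<^bsub>H\<^esub> delta \<gamma>1 y) (f y) = psi (delta \<gamma>2 (phi \<gamma>1 y)) (psi (delta \<gamma>1 y) (f y))"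
      by (rule fca_mult[OF actH d2C d1C fyX[OF yY]])
    also have "\<dots> = psi (delta \<gamma>2 (phi \<gamma>1 y)) (f (phi \<gamma>1 y))" using d1 by simp
    also have "\<dots> = f (phi \<gamma>2 (phi \<gamma>1 y))" using d2 by simp
    also have "\<dots> = f (phi (\<gamma>2 \<otimes>\<^bsub>G\<^esub> \<gamma>1) y)" using fca_mult[OF actG g2 g1 yY] by simp
    finally have "delta (\<gamma>2 \<otimes>\<^bsub>G\<^esub> \<gamma>1) y = delta \<gamma>2 (phi \<gamma>1 y) \<otimes>\<^bsub>H\<^esub> delta \<gamma>1 y"
      by (rule deq[OF g21 yY c])
    then show "delta \<gamma>2 (phi \<gamma>1 y) \<otimes>\<^bsub>H\<^esub> delta \<gamma>1 y = delta (\<gamma>2 \<otimes>\<^bsub>G\<^esub> \<gamma>1) y" by (rule sym)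
  qed
  have injd: "a = b" if aC: "a \<in> carrier G" and bC: "b \<in> carrier G" and yY: "y \<in> Y"
      and e: "delta a y = delta b y" for a b y
  proof -
    have "f (phi a y) = psi (delta a y) (f y)" using dprop[OF aC yY] by simp
    also have "\<dots> = psi (delta b y) (f y)" using e by simp
    also have "\<dots> = f (phi b y)" using dprop[OF bC yY] by simp
    finally have ff: "f (phi a y) = f (phi b y)" .
    have ga: "g (f (phi a y)) = phi a y" using gf fca_maps[OF actG aC yY] by blast
    have gb: "g (f (phi b y)) = phi b y" using gf fca_maps[OF actG bC yY] by blast
    have "phi a y = g (f (phi a y))" using ga by (rule sym)
    also have "\<dots> = g (f (phi b y))" using ff by (rule arg_cong)
    also have "\<dots> = phi b y" by (rule gb)
    finally have "phi a y = phi b y" .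
    then show "a = b" by (rule fca_unique[OF grG actG aC bC yY])
  qed
  have pre: "\<exists>\<gamma>\<in>carrier G. word_length G S \<gamma> \<le> K2 * word_length H T h \<and> delta \<gamma> y = h"
    if hC: "h \<in> carrier H" and yY: "y \<in> Y" for h y
  proof -
    obtain \<gamma> where g: "\<gamma> \<in> carrier G" "word_length G S \<gamma> \<le> K2 * word_length H T h"
        "g (psi h (f y)) = phi \<gamma> (g (f y))"
      using bspec[OF bspec[OF ext2 hC] fyX[OF yY]] by blast
    have gfy: "g (f y) = y" using gf yY by blast
    have e1: "phi \<gamma> y = g (psi h (f y))" using g(3) unfolding gfy by (rule sym)
    have pX: "psi h (f y) \<in> X" by (rule fca_maps[OF actH hC fyX[OF yY]])
    have fgp: "f (g (psi h (f y))) = psi h (f y)" using fg pX by blast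
    have e2: "psi h (f y) = f (phi \<gamma> y)" unfolding e1 fgp ..
    have "delta \<gamma> y = h" by (rule deq[OF g(1) yY hC e2])
    then show ?thesis using g(1,2) by blast
  qed
  have bij: "\<forall>y\<in>Y. bij_betw (\<lambda>\<gamma>. delta \<gamma> y) (carrier G) (carrier H)"
  proof
    fix y assume yY: "y \<in> Y"
    have inj: "inj_on (\<lambda>\<gamma>. delta \<gamma> y) (carrier G)"
      by (rule inj_onI) (rule injd[OF _ _ yY], assumption+)
    have sub: "(\<lambda>\<gamma>. delta \<gamma> y) ` carrier G \<subseteq> carrier H" using dC yY by blast
    have sup: "carrier H \<subseteq> (\<lambda>\<gamma>. delta \<gamma> y) ` carrier G"
    proof
      fix h assume hC: "h \<in> carrier H"
      obtain \<gamma> where "\<gamma> \<in> carrier G" "delta \<gamma> y = h" using pre[OF hC yY] by blast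
      then show "h \<in> (\<lambda>\<gamma>. delta \<gamma> y) ` carrier G" by blast
    qed
    show "bij_betw (\<lambda>\<gamma>. delta \<gamma> y) (carrier G) (carrier H)"
      unfolding bij_betw_def using inj sub sup by blast
  qed
  define C' where "C' = real K1 + real K2 + 1"
  have C'1: "C' \<ge> 1" unfolding C'_def by simp
  have qb: "\<forall>\<gamma>\<in>carrier G. \<forall>y\<in>Y.
        real (word_length G S \<gamma>) / C' - 0 \<le> real (word_length H T (delta \<gamma> y)) \<and>
        real (word_length H T (delta \<gamma> y)) \<le> C' * real (word_length G S \<gamma>) + 0"
  proof (intro ballI conjI)
    fix \<gamma> y assume gC: "\<gamma> \<in> carrier G" and yY: "y \<in> Y"
    have hC: "delta \<gamma> y \<in> carrier H" using dprop[OF gC yY] by simp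
    have "word_length H T (delta \<gamma> y) \<le> K1 * word_length G S \<gamma>" using dprop[OF gC yY] by simp
    then have "real (word_length H T (delta \<gamma> y)) \<le> real K1 * real (word_length G S \<gamma>)"
      by (simp only: of_nat_mult[symmetric] of_nat_le_iff)
    also have "\<dots> \<le> C' * real (word_length G S \<gamma>)" unfolding C'_def by (intro mult_right_mono) simp_all
    finally show "real (word_length H T (delta \<gamma> y)) \<le> C' * real (word_length G S \<gamma>) + 0" by simp
    obtain \<gamma>' where g': "\<gamma>' \<in> carrier G" "word_length G S \<gamma>' \<le> K2 * word_length H T (delta \<gamma> y)"
        "delta \<gamma>' y = delta \<gamma> y"
      using pre[OF hC yY] by blast
    have "\<gamma>' = \<gamma>" by (rule injd[OF g'(1) gC yY g'(3)])
    then have "word_length G S \<gamma> \<le> K2 * word_length H T (delta \<gamma> y)" using g'(2) by simp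
    then have "real (word_length G S \<gamma>) \<le> real K2 * real (word_length H T (delta \<gamma> y))"
      by (simp only: of_nat_mult[symmetric] of_nat_le_iff)
    also have "\<dots> \<le> C' * real (word_length H T (delta \<gamma> y))"
      by (rule mult_right_mono) (simp_all add: C'_def)
    also have "\<dots> = real (word_length H T (delta \<gamma> y)) * C'" by (rule mult.commute)
    finally have "real (word_length G S \<gamma>) / C' \<le> real (word_length H T (delta \<gamma> y))"
      using C'1 by (simp add: pos_divide_le_eq)
    then show "real (word_length G S \<gamma>) / C' - 0 \<le> real (word_length H T (delta \<gamma> y))" by simp
  qed
  have QI: "\<exists>C'\<ge>1. \<exists>A'\<ge>0. \<forall>\<gamma>\<in>carrier G. \<forall>y\<in>Y.
        real (word_length G S \<gamma>) / C' - A' \<le> real (word_length H T (delta \<gamma> y)) \<and>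
        real (word_length H T (delta \<gamma> y)) \<le> C' * real (word_length G S \<gamma>) + A'"
  proof (rule exI[of _ C'], intro conjI C'1, rule exI[of _ 0], intro conjI)
    show "(0::real) \<le> 0" by simp
  qed (rule qb)
  show ?thesis
    by (rule exI[of _ delta], intro conjI) (rule dC, rule cont, rule coc, rule bij, rule QI)
qed

end
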